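(* Consider the two-period difference-in-differences setting with anticipation described in the context, and suppose: (i) (Sampling) $\{Y_{i0}(0,1), Y_{i0}(1,1), Y_{i0}(0), Y_{i1}(0), Y_{i1}(1), D_i, A_i\}_{i=1}^n$ are independent and identically distributed across $i$; (ii) $Y_{i0}(0)=Y_{i0}(0,1)$; (iii) (Parallel trends) $\mathbb{E}[g(Y_{i1}(0))-g(Y_{i0}(0))\mid D_i=1]=\mathbb{E}[g(Y_{i1}(0))-g(Y_{i0}(0))\mid D_i=0]$; (iv) $\mathbb{P}[A_i=1\mid D_i=1]\le \pi$ for a given $\pi\in(0,1)$; (v) $|\tau_g|\le|\mu_g|$. Let $m_g=\mathbb{E}[g(Y_{i1})-g(Y_{i0})\mid D_i=1]-\mathbb{E}[g(Y_{i1})-g(Y_{i0})\mid D_i=0]$. Then $\mu_g$ is partially identified via the closed interval \[\mu_g\in m_g\left[\min\left\{1,\frac{1}{1-\operatorname{sgn}(\tau_g\mu_g)\pi}\right\},\ \max\left\{1,\frac{1}{1-\operatorname{sgn}(\tau_g\mu_g)\pi}\right\}\right],\] i.e. $\mu_g=m_g c$ for some $c$ in the displayed interval of real numbers.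
   Context: There are two periods $t\in\{0,1\}$ and units $i=1,\dots,n$. Each unit has an observed binary treatment $D_i\in\{0,1\}$ (applied in period 1) and an unobserved binary anticipation status $A_i\in\{0,1\}$ in period 0 ($A_i=1$ means the unit anticipates). Potential outcomes: $Y_{i1}(d)$ for $d\in\{0,1\}$ in period 1; $Y_{i0}(0)$ in period 0 for untreated units; and $Y_{i0}(a,1)$, $a\in\{0,1\}$, the period-0 outcome of a unit that will be treated, with anticipation status $a$. Observed outcomes: $Y_{i1}=D_iY_{i1}(1)+(1-D_i)Y_{i1}(0)$ and $Y_{i0}=(1-D_i)Y_{i0}(0)+D_i[(1-A_i)Y_{i0}(0,1)+A_iY_{i0}(1,1)]$. Let $g$ be a known measurable real function with $\mathbb{E}|g(Y)|<\infty$ for the relevant outcomes. The parameter of interest is $\mu_g=\mathbb{E}[g(Y_{i1}(1))-g(Y_{i1}(0))\mid D_i=1]$, and the anticipatory effect is $\tau_g=\mathbb{E}[g(Y_{i0}(1,1))-g(Y_{i0}(0,1))\mid D_i=1,A_i=1]$. $\operatorname{sgn}$ denotes the sign function. *)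

theory Defs
  imports "HOL-Probability.Probability"
begin

definition cond_ev :: "'a measure \<Rightarrow> ('a \<Rightarrow> real) \<Rightarrow> ('a \<Rightarrow> bool) \<Rightarrow> real" where
  "cond_ev M X P =
     (\<integral>\<omega>. indicator {\<omega>\<in>space M. P \<omega>} \<omega> * X \<omega> \<partial>M) / measure M {\<omega>\<in>space M. P \<omega>}"

definition cond_prob :: "'a measure \<Rightarrow> ('a \<Rightarrow> bool) \<Rightarrow> ('a \<Rightarrow> bool) \<Rightarrow> real" where
  "cond_prob M Q P =
     measure M {\<omega>\<in>space M. Q \<omega> \<and> P \<omega>} / measure M {\<omega>\<in>space M. P \<omega>}"

definition obs_Y1 :: "bool \<Rightarrow> real \<Rightarrow> real \<Rightarrow> real" where
  "obs_Y1 d y11 y10 = (if d then y11 else y10)"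

definition obs_Y0 :: "bool \<Rightarrow> bool \<Rightarrow> real \<Rightarrow> real \<Rightarrow> real \<Rightarrow> real" where
  "obs_Y0 d a y00 y001 y011 = (if d then (if a then y011 else y001) else y00)"

definition unit_vec ::
  "real \<Rightarrow> real \<Rightarrow> real \<Rightarrow> real \<Rightarrow> real \<Rightarrow> bool \<Rightarrow> bool
     \<Rightarrow> real \<times> real \<times> real \<times> real \<times> real \<times> real \<times> real" where
  "unit_vec y001 y011 y00 y10 y11 d a = (y001, y011, y00, y10, y11, of_bool d, of_bool a)"

end

theory Submission
  imports Defs
begin

lemma final_arith:
  fixes q \<pi> \<tau> \<mu> m :: real
  assumes "0 \<le> q" "q \<le> \<pi>" "0 < \<pi>" "\<pi> < 1" "\<bar>\<tau>\<bar> \<le> \<bar>\<mu>\<bar>" "m = \<mu> - q * \<tau>"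
  shows "\<exists>c. min 1 (1 / (1 - sgn (\<tau> * \<mu>) * \<pi>)) \<le> c \<and> c \<le> max 1 (1 / (1 - sgn (\<tau> * \<mu>) * \<pi>)) \<and> \<mu> = m * c"
proof (cases "\<mu> = 0")
  case True
  then have "\<tau> = 0" using assms by simp
  then show ?thesis using True assms by (intro exI[of _ 1]) auto
next
  case False
  define r where "r = \<tau> / \<mu>"
  have r1: "\<bar>r\<bar> \<le> 1" using assms False by (simp add: r_def abs_divide divide_le_eq_1)
  have tau: "\<tau> = r * \<mu>" using False by (simp add: r_def)
  have m: "m = \<mu> * (1 - q * r)" using assms tau by (simp add: algebra_simps)
  have sg: "sgn (\<tau> * \<mu>) = sgn r" using False tau
    by (simp add: sgn_mult)
  have qr: "\<bar>q * r\<bar> \<le> \<pi>" using assms r1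
  proof -
    have "q * \<bar>r\<bar> \<le> q * 1" using assms(1) r1 by (intro mult_left_mono) auto
    then show ?thesis using assms by (simp add: abs_mult)
  qed
  have pos: "1 - q * r > 0" using qr assms by linarith
  show ?thesis
  proof (intro exI[of _ "1 / (1 - q * r)"] conjI)
    show "\<mu> = m * (1 / (1 - q * r))" using m pos by simp
  next
    consider "r > 0" | "r = 0" | "r < 0" by linarith
    then have "min 1 (1 / (1 - sgn r * \<pi>)) \<le> 1 / (1 - q * r) \<and> 1 / (1 - q * r) \<le> max 1 (1 / (1 - sgn r * \<pi>))"
    proof cases
      case 1
      have a: "q * r \<ge> 0" using 1 assms by simp
      have b: "q * r \<le> \<pi>" using qr by simp
      have "1 \<le> 1 / (1 - q * r)" using a pos by simp
      moreover have "1 / (1 - q * r) \<le> 1 / (1 - \<pi>)" using b assms pos by (intro divide_left_mono) auto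
      ultimately show ?thesis using 1 by simp
    next
      case 2 then show ?thesis by simp
    next
      case 3
      have a: "q * r \<le> 0" using 3 assms by (simp add: mult_nonneg_nonpos)
      have b: "- \<pi> \<le> q * r" using qr by simp
      have "1 / (1 - q * r) \<le> 1" using a pos by simp
      moreover have "1 / (1 + \<pi>) \<le> 1 / (1 - q * r)" using b assms pos by (intro divide_left_mono) auto
      ultimately show ?thesis using 3 by simp
    qed
    then show "min 1 (1 / (1 - sgn (\<tau> * \<mu>) * \<pi>)) \<le> 1 / (1 - q * r)"
         "1 / (1 - q * r) \<le> max 1 (1 / (1 - sgn (\<tau> * \<mu>) * \<pi>))" using sg by auto
  qed
qed


theorem theorem1:
  fixes M :: "'a measure" and n :: nat and g :: "real \<Rightarrow> real" and \<pi> :: real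
    and Y0_01 Y0_11 Y0_0 Y1_0 Y1_1 :: "nat \<Rightarrow> 'a \<Rightarrow> real"
    and D A :: "nat \<Rightarrow> 'a \<Rightarrow> bool"
    and i :: nat
  assumes prob: "prob_space M"
    and n: "n \<ge> 1" and i: "i \<in> {1..n}"
    and rv: "\<And>j. j \<in> {1..n} \<Longrightarrow>
        (\<lambda>\<omega>. unit_vec (Y0_01 j \<omega>) (Y0_11 j \<omega>) (Y0_0 j \<omega>) (Y1_0 j \<omega>) (Y1_1 j \<omega>) (D j \<omega>) (A j \<omega>))
          \<in> borel_measurable M"
    \<comment> \<open>(i) sampling: i.i.d. across units\<close>
    and indep: "prob_space.indep_vars M (\<lambda>_. borel)
        (\<lambda>j \<omega>. unit_vec (Y0_01 j \<omega>) (Y0_11 j \<omega>) (Y0_0 j \<omega>) (Y1_0 j \<omega>) (Y1_1 j \<omega>) (D j \<omega>) (A j \<omega>)) {1..n}"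
    and ident: "\<And>j. j \<in> {1..n} \<Longrightarrow>
        distr M borel (\<lambda>\<omega>. unit_vec (Y0_01 j \<omega>) (Y0_11 j \<omega>) (Y0_0 j \<omega>) (Y1_0 j \<omega>) (Y1_1 j \<omega>) (D j \<omega>) (A j \<omega>))
      = distr M borel (\<lambda>\<omega>. unit_vec (Y0_01 1 \<omega>) (Y0_11 1 \<omega>) (Y0_0 1 \<omega>) (Y1_0 1 \<omega>) (Y1_1 1 \<omega>) (D 1 \<omega>) (A 1 \<omega>))"
    \<comment> \<open>g measurable, integrable on the relevant outcomes\<close>
    and g_meas: "g \<in> borel_measurable borel"
    and int: "\<And>j. j \<in> {1..n} \<Longrightarrow>
        integrable M (\<lambda>\<omega>. g (Y0_01 j \<omega>)) \<and> integrable M (\<lambda>\<omega>. g (Y0_11 j \<omega>)) \<and>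
        integrable M (\<lambda>\<omega>. g (Y0_0 j \<omega>)) \<and> integrable M (\<lambda>\<omega>. g (Y1_0 j \<omega>)) \<and>
        integrable M (\<lambda>\<omega>. g (Y1_1 j \<omega>))"
    \<comment> \<open>conditioning events have positive probability\<close>
    and posD1: "measure M {\<omega>\<in>space M. D i \<omega>} > 0"
    and posD0: "measure M {\<omega>\<in>space M. \<not> D i \<omega>} > 0"
    \<comment> \<open>(ii)\<close>
    and no_antic_base: "\<And>j \<omega>. j \<in> {1..n} \<Longrightarrow> \<omega> \<in> space M \<Longrightarrow> Y0_0 j \<omega> = Y0_01 j \<omega>"
    \<comment> \<open>(iii) parallel trends\<close>
    and PT: "cond_ev M (\<lambda>\<omega>. g (Y1_0 i \<omega>) - g (Y0_0 i \<omega>)) (\<lambda>\<omega>. D i \<omega>)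
           = cond_ev M (\<lambda>\<omega>. g (Y1_0 i \<omega>) - g (Y0_0 i \<omega>)) (\<lambda>\<omega>. \<not> D i \<omega>)"
    \<comment> \<open>(iv)\<close>
    and pi: "0 < \<pi>" "\<pi> < 1"
    and antic_bound: "cond_prob M (\<lambda>\<omega>. A i \<omega>) (\<lambda>\<omega>. D i \<omega>) \<le> \<pi>"
    \<comment> \<open>(v)\<close>
    and tau_mu: "\<bar>cond_ev M (\<lambda>\<omega>. g (Y0_11 i \<omega>) - g (Y0_01 i \<omega>)) (\<lambda>\<omega>. D i \<omega> \<and> A i \<omega>)\<bar>
               \<le> \<bar>cond_ev M (\<lambda>\<omega>. g (Y1_1 i \<omega>) - g (Y1_0 i \<omega>)) (\<lambda>\<omega>. D i \<omega>)\<bar>"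
  shows "let \<mu> = cond_ev M (\<lambda>\<omega>. g (Y1_1 i \<omega>) - g (Y1_0 i \<omega>)) (\<lambda>\<omega>. D i \<omega>);
             \<tau> = cond_ev M (\<lambda>\<omega>. g (Y0_11 i \<omega>) - g (Y0_01 i \<omega>)) (\<lambda>\<omega>. D i \<omega> \<and> A i \<omega>);
             Y1 = (\<lambda>\<omega>. obs_Y1 (D i \<omega>) (Y1_1 i \<omega>) (Y1_0 i \<omega>));
             Y0 = (\<lambda>\<omega>. obs_Y0 (D i \<omega>) (A i \<omega>) (Y0_0 i \<omega>) (Y0_01 i \<omega>) (Y0_11 i \<omega>));
             m = cond_ev M (\<lambda>\<omega>. g (Y1 \<omega>) - g (Y0 \<omega>)) (\<lambda>\<omega>. D i \<omega>)
               - cond_ev M (\<lambda>\<omega>. g (Y1 \<omega>) - g (Y0 \<omega>)) (\<lambda>\<omega>. \<not> D i \<omega>);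
             b = 1 / (1 - sgn (\<tau> * \<mu>) * \<pi>)
         in \<exists>c. min 1 b \<le> c \<and> c \<le> max 1 b \<and> \<mu> = m * c"
proof -
  interpret prob_space M by (rule prob)
  define F where "F = (\<lambda>\<omega>. unit_vec (Y0_01 i \<omega>) (Y0_11 i \<omega>) (Y0_0 i \<omega>) (Y1_0 i \<omega>) (Y1_1 i \<omega>) (D i \<omega>) (A i \<omega>))"
  have Fm: "F \<in> borel_measurable M" using rv[OF i] by (simp add: F_def)
  have "(\<lambda>\<omega>. fst (snd (snd (snd (snd (snd (F \<omega>))))))) \<in> borel_measurable M"
    using Fm unfolding borel_prod[symmetric] by measurable
  then have Dm: "(\<lambda>\<omega>. of_bool (D i \<omega>) :: real) \<in> borel_measurable M" by (simp add: F_def unit_vec_def)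
  have "(\<lambda>\<omega>. snd (snd (snd (snd (snd (snd (F \<omega>))))))) \<in> borel_measurable M"
    using Fm unfolding borel_prod[symmetric] by measurable
  then have Am: "(\<lambda>\<omega>. of_bool (A i \<omega>) :: real) \<in> borel_measurable M" by (simp add: F_def unit_vec_def)
  define SD where "SD = {\<omega>\<in>space M. D i \<omega>}"
  define SN where "SN = {\<omega>\<in>space M. \<not> D i \<omega>}"
  define SDA where "SDA = {\<omega>\<in>space M. D i \<omega> \<and> A i \<omega>}"
  have "{\<omega>\<in>space M. (of_bool (D i \<omega>) :: real) = 1} \<in> sets M" using Dm by measurable
  moreover have "{\<omega>\<in>space M. (of_bool (D i \<omega>) :: real) = 1} = SD" by (auto simp: SD_def)
  ultimately have SDs: "SD \<in> sets M" by simp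
  have "{\<omega>\<in>space M. (of_bool (D i \<omega>) :: real) = 0} \<in> sets M" using Dm by measurable
  moreover have "{\<omega>\<in>space M. (of_bool (D i \<omega>) :: real) = 0} = SN" by (auto simp: SN_def)
  ultimately have SNs: "SN \<in> sets M" by simp
  have "{\<omega>\<in>space M. (of_bool (A i \<omega>) :: real) = 1} \<in> sets M" using Am by measurable
  moreover have "{\<omega>\<in>space M. (of_bool (A i \<omega>) :: real) = 1} \<inter> SD = SDA" by (auto simp: SD_def SDA_def)
  ultimately have SDAs: "SDA \<in> sets M" using SDs by (metis sets.Int)
  note I = int[OF i]
  define Imu where "Imu = (\<integral>\<omega>. indicator SD \<omega> * (g (Y1_1 i \<omega>) - g (Y1_0 i \<omega>)) \<partial>M)"
  define Ip1 where "Ip1 = (\<integral>\<omega>. indicator SD \<omega> * (g (Y1_0 i \<omega>) - g (Y0_0 i \<omega>)) \<partial>M)"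
  define Ip0 where "Ip0 = (\<integral>\<omega>. indicator SN \<omega> * (g (Y1_0 i \<omega>) - g (Y0_0 i \<omega>)) \<partial>M)"
  define Itau where "Itau = (\<integral>\<omega>. indicator SDA \<omega> * (g (Y0_11 i \<omega>) - g (Y0_01 i \<omega>)) \<partial>M)"
  have int1: "integrable M (\<lambda>\<omega>. indicator SD \<omega> * (g (Y1_1 i \<omega>) - g (Y1_0 i \<omega>)))"
    using integrable_real_mult_indicator[OF SDs, of "\<lambda>\<omega>. g (Y1_1 i \<omega>) - g (Y1_0 i \<omega>)"] I
    by (simp add: mult.commute)
  have int2: "integrable M (\<lambda>\<omega>. indicator SD \<omega> * (g (Y1_0 i \<omega>) - g (Y0_0 i \<omega>)))"
    using integrable_real_mult_indicator[OF SDs, of "\<lambda>\<omega>. g (Y1_0 i \<omega>) - g (Y0_0 i \<omega>)"] I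
    by (simp add: mult.commute)
  have int3: "integrable M (\<lambda>\<omega>. indicator SDA \<omega> * (g (Y0_11 i \<omega>) - g (Y0_01 i \<omega>)))"
    using integrable_real_mult_indicator[OF SDAs, of "\<lambda>\<omega>. g (Y0_11 i \<omega>) - g (Y0_01 i \<omega>)"] I
    by (simp add: mult.commute)
  define Y1 where "Y1 = (\<lambda>\<omega>. obs_Y1 (D i \<omega>) (Y1_1 i \<omega>) (Y1_0 i \<omega>))"
  define Y0 where "Y0 = (\<lambda>\<omega>. obs_Y0 (D i \<omega>) (A i \<omega>) (Y0_0 i \<omega>) (Y0_01 i \<omega>) (Y0_11 i \<omega>))"
  have eqD: "(\<integral>\<omega>. indicator SD \<omega> * (g (Y1 \<omega>) - g (Y0 \<omega>)) \<partial>M) = Imu + Ip1 - Itau"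
  proof -
    have "(\<integral>\<omega>. indicator SD \<omega> * (g (Y1 \<omega>) - g (Y0 \<omega>)) \<partial>M)
      = (\<integral>\<omega>. indicator SD \<omega> * (g (Y1_1 i \<omega>) - g (Y1_0 i \<omega>)) + indicator SD \<omega> * (g (Y1_0 i \<omega>) - g (Y0_0 i \<omega>))
           - indicator SDA \<omega> * (g (Y0_11 i \<omega>) - g (Y0_01 i \<omega>)) \<partial>M)"
      by (rule Bochner_Integration.integral_cong[OF refl]) (auto simp: Y1_def Y0_def obs_Y1_def obs_Y0_def SD_def SDA_def indicator_def no_antic_base[OF i])
    also have "\<dots> = Imu + Ip1 - Itau"
      unfolding Imu_def Ip1_def Itau_def using int1 int2 int3 by simp
    finally show ?thesis .
  qed
  have eqN: "(\<integral>\<omega>. indicator SN \<omega> * (g (Y1 \<omega>) - g (Y0 \<omega>)) \<partial>M) = Ip0"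
    unfolding Ip0_def
    by (rule Bochner_Integration.integral_cong[OF refl]) (auto simp: Y1_def Y0_def obs_Y1_def obs_Y0_def SN_def indicator_def)
  define PD where "PD = measure M SD"
  define PN where "PN = measure M SN"
  define PDA where "PDA = measure M SDA"
  have PDpos: "PD > 0" using posD1 by (simp add: PD_def SD_def)
  have PNpos: "PN > 0" using posD0 by (simp add: PN_def SN_def)
  have mu: "cond_ev M (\<lambda>\<omega>. g (Y1_1 i \<omega>) - g (Y1_0 i \<omega>)) (\<lambda>\<omega>. D i \<omega>) = Imu / PD"
    by (simp add: cond_ev_def Imu_def PD_def SD_def)
  have tau: "cond_ev M (\<lambda>\<omega>. g (Y0_11 i \<omega>) - g (Y0_01 i \<omega>)) (\<lambda>\<omega>. D i \<omega> \<and> A i \<omega>) = Itau / PDA"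
    by (simp add: cond_ev_def Itau_def PDA_def SDA_def)
  have pt: "Ip1 / PD = Ip0 / PN" using PT
    by (simp add: cond_ev_def Ip1_def Ip0_def PD_def PN_def SD_def SN_def)
  have m: "cond_ev M (\<lambda>\<omega>. g (Y1 \<omega>) - g (Y0 \<omega>)) (\<lambda>\<omega>. D i \<omega>)
               - cond_ev M (\<lambda>\<omega>. g (Y1 \<omega>) - g (Y0 \<omega>)) (\<lambda>\<omega>. \<not> D i \<omega>) = (Imu + Ip1 - Itau) / PD - Ip0 / PN"
    using eqD eqN by (simp add: cond_ev_def PD_def PN_def SD_def SN_def)
  have q: "cond_prob M (\<lambda>\<omega>. A i \<omega>) (\<lambda>\<omega>. D i \<omega>) = PDA / PD"
    by (simp add: cond_prob_def PDA_def PD_def SDA_def SD_def conj_commute)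
  have key: "Itau / PD = (PDA / PD) * (Itau / PDA)"
  proof (cases "PDA = 0")
    case True
    have "emeasure M SDA = 0" using True SDAs by (simp add: PDA_def emeasure_eq_measure)
    then have "AE \<omega> in M. \<omega> \<notin> SDA" using SDAs by (intro AE_I'[of SDA]) auto
    then have "AE \<omega> in M. indicator SDA \<omega> * (g (Y0_11 i \<omega>) - g (Y0_01 i \<omega>)) = 0"
      by eventually_elim simp
    then have "Itau = 0" unfolding Itau_def by (rule integral_eq_zero_AE)
    then show ?thesis by simp
  next
    case False
    then show ?thesis using PDpos by simp
  qed
  have q0: "0 \<le> PDA / PD" using PDpos by (simp add: PDA_def)
  have mm: "(Imu + Ip1 - Itau) / PD - Ip0 / PN = Imu / PD - (PDA / PD) * (Itau / PDA)"
    using pt key PDpos by (simp add: add_divide_distrib diff_divide_distrib)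
  show ?thesis
    unfolding Let_def Y1_def[symmetric] Y0_def[symmetric] m mu tau mm
    using final_arith[OF q0 _ pi(1) pi(2), of "Itau / PDA" "Imu / PD"] antic_bound tau_mu q mu tau
    by simp
qed

end
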